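(* Consider Dynamic A* (with \texttt{reeval} true or false) using a dyn-admissible dynamic heuristic on a solvable transition system with initial state $s_I$. Then at the beginning of each iteration of the while loop, Open contains an entry $\langle\cdot,\hat g,\hat h\rangle$ with $\hat g+\hat h\le h^*(s_I)$.
   Context: A transition system is $\mathcal T=\langle S,L,c,T,s_I,S_G\rangle$ with finite states $S$, finite labels $L$, cost function $c:L\to\mathbb R_{\ge0}$, transitions $T\subseteq S\times L\times S$, initial state $s_I$, goal states $S_G\subseteq S$. Paths, costs, solutions (paths from $s_I$ to a goal state) are as usual; $\mathcal T$ is solvable if it has a solution; $g^*(s)$ is the cost of an optimal path from $s_I$ to $s$ and $h^*(s)$ the minimal cost of a path from $s$ to a goal ($\infty$ if none). An information source $\sigma$ consists of a set $\mathcal I_\sigma$, $\iota_0^\sigma\in\mathcal I_\sigma$, $\mathrm{update}_\sigma:\mathcal I_\sigma\times T\to\mathcal I_\sigma$, $\mathrm{refine}_\sigma:\mathcal I_\sigma\times S\to\mathcal I_\sigma$. Reachable information: $\iota_n$ is reachable if obtained from $\iota_0^\sigma$ by a sequence of refine steps on states and update steps on transitions $e_1,\dots,e_n$, where each refined state and each origin of an updated transition is $s_I$ or the target of an earlier updated transition. A dynamic heuristic over $\sigma$ is $h:S\times\mathcal I_\sigma\to\mathbb R_{\ge0}\cup\{\infty\}$; it is dyn-admissible if $h(s,\iota)\le h^*(s)$ for all $s$ and all reachable $\iota$. Parent source $\sigma_p$: $\mathcal I_{\sigma_p}$ = partial functions $S\rightharpoonup\mathbb R_{\ge0}\times(T\cup\{\bot\})$;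 $\iota_0=\{s_I\mapsto\langle0,\bot\rangle\}$; refine is the identity; $\mathrm{update}(\iota,\langle s,\ell,s'\rangle)$ with $\iota(s)=\langle g,\cdot\rangle$ changes only $s'$, setting it to $\langle g+c(\ell),\langle s,\ell,s'\rangle\rangle$ if $\iota(s')$ is undefined or has $g$-component $\ge g+c(\ell)$, otherwise unchanged. Dynamic A* takes $\mathcal T$, sources $\sigma_p,\sigma_h$, a dynamic heuristic $h$ over $\sigma_h$ and a Boolean flag \texttt{reeval}. Notation: at any moment $g(s)$ is the $g$-component of the current $\mathcal I(\sigma_p)(s)$ and $h(s)$ denotes $h(s,\mathcal I(\sigma_h))$ for the current $\mathcal I(\sigma_h)$. Open is a priority queue of entries $\langle s,g,h\rangle$ (duplicates allowed), popped by minimal stored value $g+h$ (ties arbitrary). Algorithm: 1. $\mathcal I(\sigma):=\iota_0^\sigma$ for both sources; $S_{\mathrm{known}}:=\{s_I\}$; Closed $:=\emptyset$; Open empty. If $h(s_I)<\infty$ insert $\langle s_I,g(s_I),h(s_I)\rangle$. 2. While Open is nonempty: pop an entry $\langle s,\hat g,\hat h\rangle$ of minimal $\hat g+\hat h$. If $s\in$ Closed, continue with the next iteration. Otherwise set $\mathcal I(\sigma):=\mathrm{refine}_\sigma(\mathcal I(\sigma),s)$ for both sources. If \texttt{reeval} is true and $\hat h<h(s)$: if $h(s)<\infty$ insert $\langle s,g(s),h(s)\rangle$; continue with the next iteration (this is a re-evaluation). Otherwise add $s$ to Closed ($s$ is expanded). If $s\in S_G$, return the path obtained by following the parent pointers of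 $\mathcal I(\sigma_p)$ from $s$ back to $s_I$. Otherwise, for each $t=\langle s,\ell,s'\rangle\in T$ in some order: let $old:=g(s')$ if $s'\in S_{\mathrm{known}}$ and undefined otherwise; set $\mathcal I(\sigma):=\mathrm{update}_\sigma(\mathcal I(\sigma),t)$ for both sources; add $s'$ to $S_{\mathrm{known}}$; if $h(s')=\infty$ skip $s'$; else if $old$ is undefined insert $\langle s',g(s'),h(s')\rangle$; else if $old>g(s')$, remove $s'$ from Closed if it is there (reopening) and insert $\langle s',g(s'),h(s')\rangle$. 3. Return "unsolvable". *)

theory Defs
  imports Main "HOL-Library.Extended_Nonnegative_Real" "HOL-Library.Multiset"
begin

type_synonym ('s,'l) trans = "'s \<times> 'l \<times> 's"

fun is_path :: "('s,'l) trans set \<Rightarrow> 's \<Rightarrow> ('s,'l) trans list \<Rightarrow> 's \<Rightarrow> bool" where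
  "is_path T s [] s' = (s = s')"
| "is_path T s ((a,l,b) # p) s' = ((a,l,b) \<in> T \<and> a = s \<and> is_path T b p s')"

definition path_cost :: "('l \<Rightarrow> real) \<Rightarrow> ('s,'l) trans list \<Rightarrow> real" where
  "path_cost c p = sum_list (map (\<lambda>(_,l,_). c l) p)"

definition hstar :: "('s,'l) trans set \<Rightarrow> ('l \<Rightarrow> real) \<Rightarrow> 's set \<Rightarrow> 's \<Rightarrow> ennreal" where
  "hstar T c SG s = (INF p \<in> {p. \<exists>sg\<in>SG. is_path T s p sg}. ennreal (path_cost c p))"

definition solvable :: "('s,'l) trans set \<Rightarrow> 's \<Rightarrow> 's set \<Rightarrow> bool" where
  "solvable T sI SG = (\<exists>p. \<exists>sg\<in>SG. is_path T sI p sg)"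

definition transition_system ::
  "'s set \<Rightarrow> 'l set \<Rightarrow> ('l \<Rightarrow> real) \<Rightarrow> ('s,'l) trans set \<Rightarrow> 's \<Rightarrow> 's set \<Rightarrow> bool" where
  "transition_system S L c T sI SG \<longleftrightarrow>
     finite S \<and> finite L \<and> (\<forall>l\<in>L. c l \<ge> 0) \<and> T \<subseteq> S \<times> L \<times> S \<and> sI \<in> S \<and> SG \<subseteq> S"

record ('i,'s,'l) info_source =
  src_init   :: "'i"
  src_update :: "'i \<Rightarrow> ('s,'l) trans \<Rightarrow> 'i"
  src_refine :: "'i \<Rightarrow> 's \<Rightarrow> 'i"

inductive reachable_info ::
  "('i,'s,'l) info_source \<Rightarrow> ('s,'l) trans set \<Rightarrow> 's \<Rightarrow> 'i \<Rightarrow> 's set \<Rightarrow> bool"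
  for \<sigma> T sI where
  ri_init:   "reachable_info \<sigma> T sI (src_init \<sigma>) {sI}"
| ri_refine: "reachable_info \<sigma> T sI \<iota> R \<Longrightarrow> s \<in> R \<Longrightarrow>
                reachable_info \<sigma> T sI (src_refine \<sigma> \<iota> s) R"
| ri_update: "reachable_info \<sigma> T sI \<iota> R \<Longrightarrow> (s,l,s') \<in> T \<Longrightarrow> s \<in> R \<Longrightarrow>
                reachable_info \<sigma> T sI (src_update \<sigma> \<iota> (s,l,s')) (insert s' R)"

definition dyn_admissible ::
  "('i,'s,'l) info_source \<Rightarrow> ('s,'l) trans set \<Rightarrow> ('l \<Rightarrow> real) \<Rightarrow> 's \<Rightarrow> 's set
   \<Rightarrow> ('s \<Rightarrow> 'i \<Rightarrow> ennreal) \<Rightarrow> bool" where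
  "dyn_admissible \<sigma> T c sI SG h \<longleftrightarrow>
     (\<forall>\<iota> R s. reachable_info \<sigma> T sI \<iota> R \<longrightarrow> h s \<iota> \<le> hstar T c SG s)"

type_synonym ('s,'l) pinfo = "'s \<Rightarrow> (real \<times> ('s,'l) trans option) option"

text \<open>Update of the parent source; if iota(s) is undefined (never happens in the algorithm)
  the information is left unchanged.\<close>
definition parent_update :: "('l \<Rightarrow> real) \<Rightarrow> ('s,'l) pinfo \<Rightarrow> ('s,'l) trans \<Rightarrow> ('s,'l) pinfo" where
  "parent_update c \<iota> t = (case t of (s,l,s') \<Rightarrow>
     (case \<iota> s of None \<Rightarrow> \<iota>
      | Some (g,_) \<Rightarrow>
          (case \<iota> s' of None \<Rightarrow> \<iota>(s' \<mapsto> (g + c l, Some t))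
           | Some (g',_) \<Rightarrow> if g' \<ge> g + c l then \<iota>(s' \<mapsto> (g + c l, Some t)) else \<iota>)))"

definition parent_source :: "('l \<Rightarrow> real) \<Rightarrow> 's \<Rightarrow> (('s,'l) pinfo,'s,'l) info_source" where
  "parent_source c sI = \<lparr> src_init = [sI \<mapsto> (0, None)],
                          src_update = parent_update c,
                          src_refine = (\<lambda>\<iota> s. \<iota>) \<rparr>"

definition gval :: "('s,'l) pinfo \<Rightarrow> 's \<Rightarrow> real" where
  "gval \<iota> s = fst (the (\<iota> s))"

record ('i,'s,'l) astar_cfg =
  cfg_Ip     :: "('s,'l) pinfo"
  cfg_Ih     :: "'i"
  cfg_Known  :: "'s set"
  cfg_Closed :: "'s set"
  cfg_Open   :: "('s \<times> real \<times> ennreal) multiset"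

definition astar_init ::
  "('l \<Rightarrow> real) \<Rightarrow> 's \<Rightarrow> ('i,'s,'l) info_source \<Rightarrow> ('s \<Rightarrow> 'i \<Rightarrow> ennreal) \<Rightarrow> ('i,'s,'l) astar_cfg" where
  "astar_init c sI \<sigma>h h =
     \<lparr> cfg_Ip = src_init (parent_source c sI), cfg_Ih = src_init \<sigma>h,
       cfg_Known = {sI}, cfg_Closed = {},
       cfg_Open = (if h sI (src_init \<sigma>h) < \<infinity>
                   then {# (sI, gval (src_init (parent_source c sI)) sI, h sI (src_init \<sigma>h)) #}
                   else {#}) \<rparr>"

definition expand_one ::
  "('l \<Rightarrow> real) \<Rightarrow> 's \<Rightarrow> ('i,'s,'l) info_source \<Rightarrow> ('s \<Rightarrow> 'i \<Rightarrow> ennreal)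
   \<Rightarrow> ('s,'l) trans \<Rightarrow> ('i,'s,'l) astar_cfg \<Rightarrow> ('i,'s,'l) astar_cfg" where
  "expand_one c sI \<sigma>h h t cfg = (case t of (s,l,s') \<Rightarrow>
     let old = (if s' \<in> cfg_Known cfg then Some (gval (cfg_Ip cfg) s') else None);
         Ip' = src_update (parent_source c sI) (cfg_Ip cfg) t;
         Ih' = src_update \<sigma>h (cfg_Ih cfg) t;
         Known' = insert s' (cfg_Known cfg);
         hv = h s' Ih';
         g' = gval Ip' s';
         cfg1 = cfg\<lparr> cfg_Ip := Ip', cfg_Ih := Ih', cfg_Known := Known' \<rparr>
     in if hv = \<infinity> then cfg1
        else (case old of
                None \<Rightarrow> cfg1\<lparr> cfg_Open := cfg_Open cfg + {# (s', g', hv) #} \<rparr>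
              | Some og \<Rightarrow>
                  if og > g' then cfg1\<lparr> cfg_Closed := cfg_Closed cfg - {s'},
                                       cfg_Open := cfg_Open cfg + {# (s', g', hv) #} \<rparr>
                  else cfg1))"

definition entry_val :: "'s \<times> real \<times> ennreal \<Rightarrow> ennreal" where
  "entry_val e = (case e of (_, g, hh) \<Rightarrow> ennreal g + hh)"

text \<open>One iteration of the while loop that does not terminate the algorithm (i.e. does not
  return a solution): from one loop head to the next. Ties in Open and the order of the
  outgoing transitions are resolved nondeterministically.\<close>
inductive astar_iter ::
  "('s,'l) trans set \<Rightarrow> ('l \<Rightarrow> real) \<Rightarrow> 's \<Rightarrow> 's set \<Rightarrow> ('i,'s,'l) info_source
   \<Rightarrow> ('s \<Rightarrow> 'i \<Rightarrow> ennreal) \<Rightarrow> bool \<Rightarrow> ('i,'s,'l) astar_cfg \<Rightarrow> ('i,'s,'l) astar_cfg \<Rightarrow> bool"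
  for T c sI SG \<sigma>h h reeval where
  it_closed:
    "e \<in># cfg_Open cfg \<Longrightarrow> (\<forall>e'\<in>#cfg_Open cfg. entry_val e \<le> entry_val e') \<Longrightarrow>
     e = (s, gh, hh) \<Longrightarrow> s \<in> cfg_Closed cfg \<Longrightarrow>
     astar_iter T c sI SG \<sigma>h h reeval cfg (cfg\<lparr> cfg_Open := cfg_Open cfg - {#e#} \<rparr>)"
| it_reeval:
    "e \<in># cfg_Open cfg \<Longrightarrow> (\<forall>e'\<in>#cfg_Open cfg. entry_val e \<le> entry_val e') \<Longrightarrow>
     e = (s, gh, hh) \<Longrightarrow> s \<notin> cfg_Closed cfg \<Longrightarrow>
     Ih1 = src_refine \<sigma>h (cfg_Ih cfg) s \<Longrightarrow>
     Ip1 = src_refine (parent_source c sI) (cfg_Ip cfg) s \<Longrightarrow>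
     reeval \<Longrightarrow> hh < h s Ih1 \<Longrightarrow>
     astar_iter T c sI SG \<sigma>h h reeval cfg
       (cfg\<lparr> cfg_Ip := Ip1, cfg_Ih := Ih1,
             cfg_Open := cfg_Open cfg - {#e#}
                + (if h s Ih1 < \<infinity> then {# (s, gval Ip1 s, h s Ih1) #} else {#}) \<rparr>)"
| it_expand:
    "e \<in># cfg_Open cfg \<Longrightarrow> (\<forall>e'\<in>#cfg_Open cfg. entry_val e \<le> entry_val e') \<Longrightarrow>
     e = (s, gh, hh) \<Longrightarrow> s \<notin> cfg_Closed cfg \<Longrightarrow>
     Ih1 = src_refine \<sigma>h (cfg_Ih cfg) s \<Longrightarrow>
     Ip1 = src_refine (parent_source c sI) (cfg_Ip cfg) s \<Longrightarrow>
     \<not> (reeval \<and> hh < h s Ih1) \<Longrightarrow> s \<notin> SG \<Longrightarrow>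
     distinct ts \<Longrightarrow> set ts = {t \<in> T. fst t = s} \<Longrightarrow>
     astar_iter T c sI SG \<sigma>h h reeval cfg
       (fold (expand_one c sI \<sigma>h h) ts
          (cfg\<lparr> cfg_Ip := Ip1, cfg_Ih := Ih1, cfg_Closed := insert s (cfg_Closed cfg),
                cfg_Open := cfg_Open cfg - {#e#} \<rparr>))"

inductive loop_head ::
  "('s,'l) trans set \<Rightarrow> ('l \<Rightarrow> real) \<Rightarrow> 's \<Rightarrow> 's set \<Rightarrow> ('i,'s,'l) info_source
   \<Rightarrow> ('s \<Rightarrow> 'i \<Rightarrow> ennreal) \<Rightarrow> bool \<Rightarrow> ('i,'s,'l) astar_cfg \<Rightarrow> bool"
  for T c sI SG \<sigma>h h reeval where
  lh_init: "loop_head T c sI SG \<sigma>h h reeval (astar_init c sI \<sigma>h h)"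
| lh_step: "loop_head T c sI SG \<sigma>h h reeval cfg \<Longrightarrow> astar_iter T c sI SG \<sigma>h h reeval cfg cfg' \<Longrightarrow>
            loop_head T c sI SG \<sigma>h h reeval cfg'"

end

theory Submission
  imports Defs
begin

lemma mset_remove_keep: "a \<noteq> b \<Longrightarrow> a \<in># M \<Longrightarrow> a \<in># M - {#b#}"
  by (simp add: in_diff_count)

lemma pu_other: "x \<noteq> s' \<Longrightarrow> parent_update c I (s,l,s') x = I x"
  by (auto simp: parent_update_def split: option.split)

lemma pu_dom: "s \<in> dom I \<Longrightarrow> dom (parent_update c I (s,l,s')) = insert s' (dom I)"
  by (auto simp: parent_update_def split: option.splits if_splits)

lemma pu_target: "s \<in> dom I \<Longrightarrow> gval (parent_update c I (s,l,s')) s' \<le> gval I s + c l"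
  by (auto simp: parent_update_def gval_def split: option.splits if_splits)

lemma pu_dec: "x \<in> dom I \<Longrightarrow> gval (parent_update c I (s,l,s')) x \<le> gval I x"
  by (auto simp: parent_update_def gval_def split: option.splits if_splits)

lemma eo_Ip: "cfg_Ip (expand_one c sI \<sigma>h h (s,l,s') cfg) = parent_update c (cfg_Ip cfg) (s,l,s')"
  by (simp add: expand_one_def Let_def parent_source_def split: option.split)

lemma eo_Ih: "cfg_Ih (expand_one c sI \<sigma>h h (s,l,s') cfg) = src_update \<sigma>h (cfg_Ih cfg) (s,l,s')"
  by (simp add: expand_one_def Let_def parent_source_def split: option.split)

lemma eo_Known: "cfg_Known (expand_one c sI \<sigma>h h (s,l,s') cfg) = insert s' (cfg_Known cfg)"
  by (simp add: expand_one_def Let_def parent_source_def split: option.split)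

lemma eo_Closed: "cfg_Closed (expand_one c sI \<sigma>h h (s,l,s') cfg) =
  (if h s' (src_update \<sigma>h (cfg_Ih cfg) (s,l,s')) \<noteq> \<infinity> \<and> s' \<in> cfg_Known cfg \<and>
      gval (cfg_Ip cfg) s' > gval (parent_update c (cfg_Ip cfg) (s,l,s')) s'
   then cfg_Closed cfg - {s'} else cfg_Closed cfg)"
  by (simp add: expand_one_def Let_def parent_source_def split: option.split)

lemma eo_Open: "cfg_Open (expand_one c sI \<sigma>h h (s,l,s') cfg) =
  (if h s' (src_update \<sigma>h (cfg_Ih cfg) (s,l,s')) \<noteq> \<infinity> \<and> (s' \<notin> cfg_Known cfg \<or>
      gval (cfg_Ip cfg) s' > gval (parent_update c (cfg_Ip cfg) (s,l,s')) s')
   then cfg_Open cfg + {# (s', gval (parent_update c (cfg_Ip cfg) (s,l,s')) s',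
                           h s' (src_update \<sigma>h (cfg_Ih cfg) (s,l,s'))) #}
   else cfg_Open cfg)"
  by (simp add: expand_one_def Let_def parent_source_def split: option.split)


locale actx =
  fixes S :: "'s set" and L :: "'l set" and c :: "'l \<Rightarrow> real"
    and T :: "('s,'l) trans set" and sI :: 's and SG :: "'s set"
    and \<sigma>h :: "('i,'s,'l) info_source" and h :: "'s \<Rightarrow> 'i \<Rightarrow> ennreal"
  assumes tsys: "transition_system S L c T sI SG"
    and adm: "dyn_admissible \<sigma>h T c sI SG h"
begin

abbreviation hs where "hs \<equiv> hstar T c SG"

lemma cnn: "(x,l,y) \<in> T \<Longrightarrow> c l \<ge> 0"
  using tsys unfolding transition_system_def by auto

lemma adm': "reachable_info \<sigma>h T sI \<iota> R \<Longrightarrow> h s \<iota> \<le> hs s"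
  using adm unfolding dyn_admissible_def by auto

definition ainv :: "('s,'l) trans set \<Rightarrow> ('i,'s,'l) astar_cfg \<Rightarrow> bool" where
 "ainv P cfg \<longleftrightarrow>
   dom (cfg_Ip cfg) = cfg_Known cfg \<and>
   cfg_Closed cfg \<subseteq> cfg_Known cfg \<and>
   cfg_Closed cfg \<inter> SG = {} \<and>
   sI \<in> cfg_Known cfg \<and> gval (cfg_Ip cfg) sI \<le> 0 \<and>
   reachable_info \<sigma>h T sI (cfg_Ih cfg) (cfg_Known cfg) \<and>
   (\<forall>e\<in>#cfg_Open cfg. fst e \<in> cfg_Known cfg \<and> snd (snd e) \<le> hs (fst e)) \<and>
   (\<forall>x. x \<in> cfg_Known cfg \<longrightarrow> hs x < \<infinity> \<longrightarrow> x \<notin> cfg_Closed cfg \<longrightarrow>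
        (\<exists>gg hh. (x,gg,hh) \<in># cfg_Open cfg \<and> gg \<le> gval (cfg_Ip cfg) x)) \<and>
   (\<forall>x l y. (x,l,y) \<in> T \<longrightarrow> x \<in> cfg_Closed cfg \<longrightarrow> hs x < \<infinity> \<longrightarrow>
        (x,l,y) \<in> P \<or> (y \<in> cfg_Known cfg \<and> gval (cfg_Ip cfg) y \<le> gval (cfg_Ip cfg) x + c l))"

lemma ainvD:
  assumes "ainv P cfg"
  shows "dom (cfg_Ip cfg) = cfg_Known cfg" and
   "cfg_Closed cfg \<subseteq> cfg_Known cfg" and
   "cfg_Closed cfg \<inter> SG = {}" and
   "sI \<in> cfg_Known cfg" and "gval (cfg_Ip cfg) sI \<le> 0" and
   "reachable_info \<sigma>h T sI (cfg_Ih cfg) (cfg_Known cfg)" and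
   "\<forall>e\<in>#cfg_Open cfg. fst e \<in> cfg_Known cfg \<and> snd (snd e) \<le> hs (fst e)" and
   "\<And>x. x \<in> cfg_Known cfg \<Longrightarrow> hs x < \<infinity> \<Longrightarrow> x \<notin> cfg_Closed cfg \<Longrightarrow>
        (\<exists>gg hh. (x,gg,hh) \<in># cfg_Open cfg \<and> gg \<le> gval (cfg_Ip cfg) x)" and
   "\<And>x l y. (x,l,y) \<in> T \<Longrightarrow> x \<in> cfg_Closed cfg \<Longrightarrow> hs x < \<infinity> \<Longrightarrow>
        (x,l,y) \<in> P \<or> (y \<in> cfg_Known cfg \<and> gval (cfg_Ip cfg) y \<le> gval (cfg_Ip cfg) x + c l)"
  using assms unfolding ainv_def by (elim conjE; blast)+

lemma ainvB: "ainv P cfg \<Longrightarrow> \<forall>x l y. (x,l,y) \<in> T \<longrightarrow> x \<in> cfg_Closed cfg \<longrightarrow> hs x < \<infinity> \<longrightarrow>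
        (x,l,y) \<in> P \<or> (y \<in> cfg_Known cfg \<and> gval (cfg_Ip cfg) y \<le> gval (cfg_Ip cfg) x + c l)"
  unfolding ainv_def by (elim conjE)

lemma eo_inv:
  assumes I: "ainv (insert (s,l,s') P) cfg" and tT: "(s,l,s') \<in> T" and sK: "s \<in> cfg_Known cfg"
  shows "ainv P (expand_one c sI \<sigma>h h (s,l,s') cfg)"
proof -
  define Ip where "Ip = cfg_Ip cfg"
  define Ip' where "Ip' = parent_update c Ip (s,l,s')"
  define Ih' where "Ih' = src_update \<sigma>h (cfg_Ih cfg) (s,l,s')"
  define K where "K = cfg_Known cfg"
  define Cl where "Cl = cfg_Closed cfg"
  define hv where "hv = h s' Ih'"
  define cfg' where "cfg' = expand_one c sI \<sigma>h h (s,l,s') cfg"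
  note defs = Ip_def Ip'_def Ih'_def K_def Cl_def hv_def
  have dom: "dom Ip = K" and ClK: "Cl \<subseteq> K" and ClSG: "Cl \<inter> SG = {}" and sIK: "sI \<in> K"
    and gsI: "gval Ip sI \<le> 0" and reach: "reachable_info \<sigma>h T sI (cfg_Ih cfg) K"
    and E: "\<forall>e\<in>#cfg_Open cfg. fst e \<in> K \<and> snd (snd e) \<le> hs (fst e)"
    and A: "\<And>x. x \<in> K \<Longrightarrow> hs x < \<infinity> \<Longrightarrow> x \<notin> Cl \<Longrightarrow>
        (\<exists>gg hh. (x,gg,hh) \<in># cfg_Open cfg \<and> gg \<le> gval Ip x)"
    and B: "\<And>x l2 y. (x,l2,y) \<in> T \<Longrightarrow> x \<in> Cl \<Longrightarrow> hs x < \<infinity> \<Longrightarrow>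
        (x,l2,y) \<in> insert (s,l,s') P \<or> (y \<in> K \<and> gval Ip y \<le> gval Ip x + c l2)"
    using ainvD[OF I] unfolding defs by auto
  have sdom: "s \<in> dom Ip" using dom sK K_def by simp
  have dom': "dom Ip' = insert s' K" using pu_dom[OF sdom] dom Ip'_def by simp
  have reach': "reachable_info \<sigma>h T sI Ih' (insert s' K)"
    unfolding Ih'_def using ri_update[OF reach tT] sK K_def by simp
  have hvle: "hv \<le> hs s'" unfolding hv_def using adm'[OF reach'] .
  have dec: "\<And>x. x \<in> K \<Longrightarrow> gval Ip' x \<le> gval Ip x" unfolding Ip'_def by (rule pu_dec) (simp add: dom)
  have oth: "\<And>x. x \<noteq> s' \<Longrightarrow> gval Ip' x = gval Ip x"
    unfolding Ip'_def gval_def by (simp add: pu_other)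
  have tgt: "gval Ip' s' \<le> gval Ip s + c l" unfolding Ip'_def using pu_target[OF sdom] .
  have Ipc: "cfg_Ip cfg' = Ip'" unfolding cfg'_def defs by (rule eo_Ip)
  have Ihc: "cfg_Ih cfg' = Ih'" unfolding cfg'_def defs by (rule eo_Ih)
  have Kc: "cfg_Known cfg' = insert s' K" unfolding cfg'_def defs by (rule eo_Known)
  have Clc: "cfg_Closed cfg' = (if hv \<noteq> \<infinity> \<and> s' \<in> K \<and> gval Ip s' > gval Ip' s' then Cl - {s'} else Cl)"
    unfolding cfg'_def defs by (rule eo_Closed)
  have Oc: "cfg_Open cfg' = (if hv \<noteq> \<infinity> \<and> (s' \<notin> K \<or> gval Ip s' > gval Ip' s')
      then cfg_Open cfg + {# (s', gval Ip' s', hv) #} else cfg_Open cfg)"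
    unfolding cfg'_def defs by (rule eo_Open)
  have Clsub: "cfg_Closed cfg' \<subseteq> Cl" using Clc by auto
  have Osup: "cfg_Open cfg \<subseteq># cfg_Open cfg'" using Oc by auto
  have c1: "dom (cfg_Ip cfg') = cfg_Known cfg'" using dom' Ipc Kc by simp
  have c2: "cfg_Closed cfg' \<subseteq> cfg_Known cfg'" using Clsub ClK Kc by auto
  have c3: "cfg_Closed cfg' \<inter> SG = {}" using Clsub ClSG by auto
  have c4: "sI \<in> cfg_Known cfg' \<and> gval (cfg_Ip cfg') sI \<le> 0"
    using sIK gsI dec[OF sIK] Kc Ipc by auto
  have c5: "reachable_info \<sigma>h T sI (cfg_Ih cfg') (cfg_Known cfg')" using reach' Ihc Kc by simp
  have c6: "\<forall>e\<in>#cfg_Open cfg'. fst e \<in> cfg_Known cfg' \<and> snd (snd e) \<le> hs (fst e)"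
    using E Oc Kc hvle by auto
  have c7: "\<forall>x. x \<in> cfg_Known cfg' \<longrightarrow> hs x < \<infinity> \<longrightarrow> x \<notin> cfg_Closed cfg' \<longrightarrow>
        (\<exists>gg hh. (x,gg,hh) \<in># cfg_Open cfg' \<and> gg \<le> gval (cfg_Ip cfg') x)"
  proof (intro allI impI)
    fix x assume xK: "x \<in> cfg_Known cfg'" and hx: "hs x < \<infinity>" and xC: "x \<notin> cfg_Closed cfg'"
    show "\<exists>gg hh. (x,gg,hh) \<in># cfg_Open cfg' \<and> gg \<le> gval (cfg_Ip cfg') x"
    proof (cases "x = s'")
      case False
      then have "x \<in> K" "x \<notin> Cl" using xK xC Kc Clc by (auto split: if_splits)
      then obtain gg hh where "(x,gg,hh) \<in># cfg_Open cfg" "gg \<le> gval Ip x" using A hx by blast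
      then show ?thesis using Osup oth[OF False] Ipc by (metis mset_subset_eqD)
    next
      case True
      have hvf: "hv \<noteq> \<infinity>" using hvle hx True by auto
      show ?thesis
      proof (cases "s' \<notin> K \<or> gval Ip s' > gval Ip' s'")
        case True
        then show ?thesis using Oc hvf Ipc \<open>x = s'\<close> by auto
      next
        case False
        then have sK': "s' \<in> K" and eq: "gval Ip' s' = gval Ip s'" using dec[of s'] by auto
        have "x \<notin> Cl" using xC Clc False by auto
        then obtain gg hh where "(x,gg,hh) \<in># cfg_Open cfg" "gg \<le> gval Ip x" using A hx sK' True by blast
        then show ?thesis using Osup eq Ipc True by (metis mset_subset_eqD)
      qed
    qed
  qed
  have c8: "\<forall>x l2 y. (x,l2,y) \<in> T \<longrightarrow> x \<in> cfg_Closed cfg' \<longrightarrow> hs x < \<infinity> \<longrightarrow>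
        (x,l2,y) \<in> P \<or> (y \<in> cfg_Known cfg' \<and> gval (cfg_Ip cfg') y \<le> gval (cfg_Ip cfg') x + c l2)"
  proof (intro allI impI)
    fix x l2 y assume xT: "(x,l2,y) \<in> T" and xC: "x \<in> cfg_Closed cfg'" and hx: "hs x < \<infinity>"
    have cl2: "c l2 \<ge> 0" using cnn xT .
    show "(x,l2,y) \<in> P \<or> (y \<in> cfg_Known cfg' \<and> gval (cfg_Ip cfg') y \<le> gval (cfg_Ip cfg') x + c l2)"
    proof (cases "y = x")
      case True then show ?thesis using xC c2 cl2 by auto
    next
      case yx: False
      show ?thesis
      proof (cases "(x,l2,y) = (s,l,s')")
        case True
        then have "x \<noteq> s'" using yx by auto
        then show ?thesis using True tgt oth Ipc Kc by auto
      next
        case nt: False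
        show ?thesis
        proof (cases "(x,l2,y) \<in> P")
          case False
          have xCl: "x \<in> Cl" using xC Clsub by auto
          have yK: "y \<in> K" and le: "gval Ip y \<le> gval Ip x + c l2" using B[OF xT xCl hx] nt False by auto
          have gx: "gval Ip' x = gval Ip x"
          proof (cases "x = s'")
            case False then show ?thesis using oth by simp
          next
            case True
            have hvf: "hv \<noteq> \<infinity>" using hvle hx True by auto
            have "x \<in> K" using xCl ClK by auto
            then have "\<not> gval Ip s' > gval Ip' s'" using xC Clc hvf True by (auto split: if_splits)
            then show ?thesis using dec[of s'] \<open>x \<in> K\<close> True by auto
          qed
          show ?thesis using dec[OF yK] le gx Ipc Kc yK by auto
        qed simp
      qed
    qed
  qed
  show ?thesis unfolding ainv_def cfg'_def[symmetric] using c1 c2 c3 c4 c5 c6 c7 c8 by blast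
qed


lemma fold_inv:
  "ainv (set ts \<union> P) cfg \<Longrightarrow> (\<forall>t\<in>set ts. t \<in> T \<and> fst t = s) \<Longrightarrow> s \<in> cfg_Known cfg \<Longrightarrow>
   ainv P (fold (expand_one c sI \<sigma>h h) ts cfg)"
proof (induction ts arbitrary: cfg)
  case Nil then show ?case by simp
next
  case (Cons t ts)
  obtain a l b where t: "t = (a,l,b)" by (cases t) auto
  have a: "a = s" "(a,l,b) \<in> T" using Cons.prems(2) t by auto
  have "ainv (insert (a,l,b) (set ts \<union> P)) cfg" using Cons.prems(1) t by simp
  then have "ainv (set ts \<union> P) (expand_one c sI \<sigma>h h (a,l,b) cfg)"
    using eo_inv[of a l b "set ts \<union> P" cfg] Cons.prems(3) a by simp
  moreover have "s \<in> cfg_Known (expand_one c sI \<sigma>h h (a,l,b) cfg)" using Cons.prems(3) by (simp add: eo_Known)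
  ultimately show ?case using Cons.IH Cons.prems(2) t by simp
qed

lemma iter_inv:
  assumes I: "ainv {} cfg" and st: "astar_iter T c sI SG \<sigma>h h reeval cfg cfg'"
  shows "ainv {} cfg'"
  using st
proof cases
  case (it_closed e s gh hh)
  note D = ainvD[OF I]
  have A': "\<forall>x. x \<in> cfg_Known cfg \<longrightarrow> hs x < \<infinity> \<longrightarrow> x \<notin> cfg_Closed cfg \<longrightarrow>
        (\<exists>gg hh. (x,gg,hh) \<in># cfg_Open cfg - {#e#} \<and> gg \<le> gval (cfg_Ip cfg) x)"
  proof (intro allI impI)
    fix x assume a: "x \<in> cfg_Known cfg" "hs x < \<infinity>" "x \<notin> cfg_Closed cfg"
    from D(8)[OF a] obtain gg hh where m: "(x,gg,hh) \<in># cfg_Open cfg" "gg \<le> gval (cfg_Ip cfg) x" by blast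
    have "(x,gg,hh) \<noteq> e" using a(3) it_closed(4,5) by auto
    then have "(x,gg,hh) \<in># cfg_Open cfg - {#e#}" using m(1) by (rule mset_remove_keep)
    then show "\<exists>gg hh. (x,gg,hh) \<in># cfg_Open cfg - {#e#} \<and> gg \<le> gval (cfg_Ip cfg) x"
      using m(2) by blast
  qed
  have E': "\<forall>e'\<in>#cfg_Open cfg - {#e#}. fst e' \<in> cfg_Known cfg \<and> snd (snd e') \<le> hs (fst e')"
    using D(7) by (meson in_diffD)
  show ?thesis unfolding it_closed(1) ainv_def using D(1-6) ainvB[OF I] A' E' by simp
next
  case (it_reeval e s gh hh Ih1 Ip1)
  note D = ainvD[OF I]
  have Ip1: "Ip1 = cfg_Ip cfg" using it_reeval(7) by (simp add: parent_source_def)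
  have "fst e \<in> cfg_Known cfg" using bspec[OF D(7) it_reeval(2)] by simp
  then have sK: "s \<in> cfg_Known cfg" using it_reeval(4) by simp
  have reach1: "reachable_info \<sigma>h T sI Ih1 (cfg_Known cfg)"
    using ri_refine[OF D(6) sK] it_reeval(6) by simp
  have hle: "h s Ih1 \<le> hs s" using adm'[OF reach1] .
  define N where "N = (if h s Ih1 < \<infinity> then {# (s, gval Ip1 s, h s Ih1) #} else {#})"
  have A': "\<forall>x. x \<in> cfg_Known cfg \<longrightarrow> hs x < \<infinity> \<longrightarrow> x \<notin> cfg_Closed cfg \<longrightarrow>
        (\<exists>gg hh. (x,gg,hh) \<in># cfg_Open cfg - {#e#} + N \<and> gg \<le> gval Ip1 x)"
  proof (intro allI impI)
    fix x assume a: "x \<in> cfg_Known cfg" "hs x < \<infinity>" "x \<notin> cfg_Closed cfg"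
    show "\<exists>gg hh. (x,gg,hh) \<in># cfg_Open cfg - {#e#} + N \<and> gg \<le> gval Ip1 x"
    proof (cases "x = s")
      case True
      then have "h s Ih1 < \<infinity>" using le_less_trans[OF hle] a(2) by simp
      then have "(s, gval Ip1 s, h s Ih1) \<in># N" unfolding N_def by simp
      then show ?thesis using True by auto
    next
      case False
      from D(8)[OF a] obtain gg hh where m: "(x,gg,hh) \<in># cfg_Open cfg" "gg \<le> gval (cfg_Ip cfg) x" by blast
      have "(x,gg,hh) \<noteq> e" using False it_reeval(4) by auto
      then have "(x,gg,hh) \<in># cfg_Open cfg - {#e#}" using m(1) by (rule mset_remove_keep)
      then have "(x,gg,hh) \<in># cfg_Open cfg - {#e#} + N" "gg \<le> gval Ip1 x"
        using m(2) Ip1 by auto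
      then show ?thesis by blast
    qed
  qed
  have E1: "\<forall>e'\<in>#cfg_Open cfg - {#e#}. fst e' \<in> cfg_Known cfg \<and> snd (snd e') \<le> hs (fst e')"
    using D(7) by (meson in_diffD)
  have E2: "\<forall>e'\<in>#N. fst e' \<in> cfg_Known cfg \<and> snd (snd e') \<le> hs (fst e')"
    using sK hle unfolding N_def by simp
  have E': "\<forall>e'\<in>#cfg_Open cfg - {#e#} + N. fst e' \<in> cfg_Known cfg \<and> snd (snd e') \<le> hs (fst e')"
    using E1 E2 by (metis union_iff)
  have D9: "\<forall>x l y. (x,l,y) \<in> T \<longrightarrow> x \<in> cfg_Closed cfg \<longrightarrow> hs x < \<infinity> \<longrightarrow>
        (x,l,y) \<in> {} \<or> (y \<in> cfg_Known cfg \<and> gval Ip1 y \<le> gval Ip1 x + c l)"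
    using D(9) Ip1 by blast
  have D15: "dom Ip1 = cfg_Known cfg" "gval Ip1 sI \<le> 0" using D(1,5) Ip1 by auto
  show ?thesis unfolding it_reeval(1) ainv_def N_def[symmetric]
    using D15 D(2-4) D9 A' E' reach1 by simp
next
  case (it_expand e s gh hh Ih1 Ip1 ts)
  note D = ainvD[OF I]
  have Ip1: "Ip1 = cfg_Ip cfg" using it_expand(7) by (simp add: parent_source_def)
  have "fst e \<in> cfg_Known cfg" using bspec[OF D(7) it_expand(2)] by simp
  then have sK: "s \<in> cfg_Known cfg" using it_expand(4) by simp
  have reach1: "reachable_info \<sigma>h T sI Ih1 (cfg_Known cfg)"
    using ri_refine[OF D(6) sK] it_expand(6) by simp
  define cfg0 where "cfg0 = cfg\<lparr> cfg_Ip := Ip1, cfg_Ih := Ih1, cfg_Closed := insert s (cfg_Closed cfg),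
                cfg_Open := cfg_Open cfg - {#e#} \<rparr>"
  have A': "\<forall>x. x \<in> cfg_Known cfg \<longrightarrow> hs x < \<infinity> \<longrightarrow> x \<notin> insert s (cfg_Closed cfg) \<longrightarrow>
        (\<exists>gg hh. (x,gg,hh) \<in># cfg_Open cfg - {#e#} \<and> gg \<le> gval Ip1 x)"
  proof (intro allI impI)
    fix x assume a: "x \<in> cfg_Known cfg" "hs x < \<infinity>" "x \<notin> insert s (cfg_Closed cfg)"
    then have a3: "x \<notin> cfg_Closed cfg" "x \<noteq> s" by auto
    from D(8)[OF a(1,2) a3(1)] obtain gg hh where m: "(x,gg,hh) \<in># cfg_Open cfg" "gg \<le> gval (cfg_Ip cfg) x" by blast
    have "(x,gg,hh) \<noteq> e" using a3(2) it_expand(4) by auto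
    then have "(x,gg,hh) \<in># cfg_Open cfg - {#e#}" "gg \<le> gval Ip1 x"
      using m Ip1 by (auto intro: mset_remove_keep)
    then show "\<exists>gg hh. (x,gg,hh) \<in># cfg_Open cfg - {#e#} \<and> gg \<le> gval Ip1 x" by blast
  qed
  have E': "\<forall>e'\<in>#cfg_Open cfg - {#e#}. fst e' \<in> cfg_Known cfg \<and> snd (snd e') \<le> hs (fst e')"
    using D(7) by (meson in_diffD)
  have B': "\<forall>x l y. (x,l,y) \<in> T \<longrightarrow> x \<in> insert s (cfg_Closed cfg) \<longrightarrow> hs x < \<infinity> \<longrightarrow>
        (x,l,y) \<in> set ts \<union> {} \<or> (y \<in> cfg_Known cfg \<and> gval Ip1 y \<le> gval Ip1 x + c l)"
  proof (intro allI impI)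
    fix x l y assume a: "(x,l,y) \<in> T" "x \<in> insert s (cfg_Closed cfg)" "hs x < \<infinity>"
    show "(x,l,y) \<in> set ts \<union> {} \<or> (y \<in> cfg_Known cfg \<and> gval Ip1 y \<le> gval Ip1 x + c l)"
    proof (cases "x = s")
      case True then show ?thesis using a(1) it_expand(11) by simp
    next
      case False then have "x \<in> cfg_Closed cfg" using a(2) by simp
      from D(9)[OF a(1) this a(3)] show ?thesis using Ip1 by simp
    qed
  qed
  have C1: "insert s (cfg_Closed cfg) \<subseteq> cfg_Known cfg" using D(2) sK by simp
  have C2: "insert s (cfg_Closed cfg) \<inter> SG = {}" using D(3) it_expand(9) by simp
  have D15: "dom Ip1 = cfg_Known cfg" "gval Ip1 sI \<le> 0" using D(1,5) Ip1 by auto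
  have "ainv (set ts \<union> {}) cfg0"
    unfolding cfg0_def ainv_def using D15 C1 C2 D(4) A' E' B' reach1 by simp
  moreover have "\<forall>t\<in>set ts. t \<in> T \<and> fst t = s" using it_expand(11) by simp
  moreover have "s \<in> cfg_Known cfg0" using sK unfolding cfg0_def by simp
  ultimately have "ainv {} (fold (expand_one c sI \<sigma>h h) ts cfg0)" by (rule fold_inv)
  then show ?thesis unfolding it_expand(1) cfg0_def .
qed

lemma lh_inv:
  assumes "loop_head T c sI SG \<sigma>h h reeval cfg"
  shows "ainv {} cfg"
  using assms
proof induction
  case lh_init
  have hle: "h sI (src_init \<sigma>h) \<le> hs sI" using adm'[OF ri_init] .
  have g0: "gval [sI \<mapsto> (0, None)] sI = 0" by (simp add: gval_def)
  show ?case unfolding ainv_def astar_init_def using hle g0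
    by (auto simp: parent_source_def gval_def intro: ri_init)
next
  case (lh_step cfg cfg')
  then show ?case using iter_inv by blast
qed

lemma path_cost_Nil[simp]: "path_cost c [] = 0" by (simp add: path_cost_def)
lemma path_cost_Cons[simp]: "path_cost c ((a,l,b)#p) = c l + path_cost c p" by (simp add: path_cost_def)

lemma path_nonneg: "is_path T x p y \<Longrightarrow> path_cost c p \<ge> 0"
proof (induction p arbitrary: x)
  case Nil then show ?case by simp
next
  case (Cons t p)
  obtain a l b where t: "t = (a,l,b)" by (cases t) auto
  then show ?case using Cons cnn[of a l b] by auto
qed

lemma hs_bound: "is_path T x p sg \<Longrightarrow> sg \<in> SG \<Longrightarrow> hs x \<le> ennreal (path_cost c p)"
  unfolding hstar_def by (rule INF_lower) auto

lemma ennreal_add_le: "(0::real) \<le> b \<Longrightarrow> ennreal (a+b) \<le> ennreal a + ennreal b"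
proof (cases "a \<ge> 0")
  case True
  assume "0 \<le> b" then show ?thesis using True by (simp add: ennreal_plus)
next
  case False
  assume b: "0 \<le> b"
  have "ennreal (a+b) \<le> ennreal b" using False by (intro ennreal_leI) simp
  also have "\<dots> \<le> ennreal a + ennreal b" by simp
  finally show ?thesis .
qed

lemma notclosed:
  assumes I: "ainv P cfg" and pa: "is_path T x p sg" "sg \<in> SG" and xK: "x \<in> cfg_Known cfg"
    and xC: "x \<notin> cfg_Closed cfg"
  shows "\<exists>e\<in>#cfg_Open cfg. entry_val e \<le> ennreal (gval (cfg_Ip cfg) x) + ennreal (path_cost c p)"
proof -
  have hb: "hs x \<le> ennreal (path_cost c p)" using hs_bound pa .
  have "hs x < \<infinity>" using le_less_trans[OF hb ennreal_less_top] by simp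
  from ainvD(8)[OF I xK this xC] obtain gg hh where m: "(x,gg,hh) \<in># cfg_Open cfg" and g: "gg \<le> gval (cfg_Ip cfg) x"
    by blast
  have "hh \<le> hs x" using bspec[OF ainvD(7)[OF I] m] by simp
  then have hh: "hh \<le> ennreal (path_cost c p)" using hb by (rule order_trans)
  have "ennreal gg + hh \<le> ennreal (gval (cfg_Ip cfg) x) + ennreal (path_cost c p)"
    using ennreal_leI[OF g] hh by (rule add_mono)
  then have "entry_val (x,gg,hh) \<le> ennreal (gval (cfg_Ip cfg) x) + ennreal (path_cost c p)"
    unfolding entry_val_def by simp
  then show ?thesis using m by blast
qed

lemma path_extract:
  assumes I: "ainv {} cfg"
  shows "is_path T x p sg \<Longrightarrow> sg \<in> SG \<Longrightarrow> x \<in> cfg_Known cfg \<Longrightarrow>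
     \<exists>e\<in>#cfg_Open cfg. entry_val e \<le> ennreal (gval (cfg_Ip cfg) x) + ennreal (path_cost c p)"
proof (induction p arbitrary: x)
  case Nil
  then have "x \<notin> cfg_Closed cfg" using ainvD(3)[OF I] by auto
  then show ?case using notclosed[OF I Nil.prems(1,2,3)] by blast
next
  case (Cons t p)
  obtain a l b where t: "t = (a,l,b)" by (cases t) auto
  have ax: "a = x" and tT: "(x,l,b) \<in> T" and pb: "is_path T b p sg" using Cons.prems(1) t by auto
  show ?case
  proof (cases "x \<in> cfg_Closed cfg")
    case False
    then show ?thesis using notclosed[OF I Cons.prems(1,2,3)] by blast
  next
    case True
    have hb: "hs x \<le> ennreal (path_cost c (t#p))" using hs_bound Cons.prems(1,2) .
    have hx: "hs x < \<infinity>" using le_less_trans[OF hb ennreal_less_top] by simp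
    have bK: "b \<in> cfg_Known cfg" and gb: "gval (cfg_Ip cfg) b \<le> gval (cfg_Ip cfg) x + c l"
      using ainvD(9)[OF I tT True hx] by auto
    obtain e where m: "e \<in># cfg_Open cfg"
      and le: "entry_val e \<le> ennreal (gval (cfg_Ip cfg) b) + ennreal (path_cost c p)"
      using Cons.IH[OF pb Cons.prems(2) bK] by blast
    have cl: "c l \<ge> 0" using cnn tT .
    have cp: "path_cost c p \<ge> 0" using path_nonneg pb .
    have "ennreal (gval (cfg_Ip cfg) b) \<le> ennreal (gval (cfg_Ip cfg) x + c l)" using gb by (rule ennreal_leI)
    also have "\<dots> \<le> ennreal (gval (cfg_Ip cfg) x) + ennreal (c l)" using cl by (rule ennreal_add_le)
    finally have "entry_val e \<le> ennreal (gval (cfg_Ip cfg) x) + ennreal (c l) + ennreal (path_cost c p)"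
      using le by (meson add_right_mono order_trans)
    also have "\<dots> = ennreal (gval (cfg_Ip cfg) x) + ennreal (path_cost c (t#p))"
      using cl cp t by (simp add: ennreal_plus add.assoc)
    finally show ?thesis using m by blast
  qed
qed

end

theorem lemma3:
  fixes S :: "'s set" and L :: "'l set" and c :: "'l \<Rightarrow> real"
    and T :: "('s,'l) trans set" and sI :: 's and SG :: "'s set"
    and \<sigma>h :: "('i,'s,'l) info_source" and h :: "'s \<Rightarrow> 'i \<Rightarrow> ennreal" and reeval :: bool
  assumes "transition_system S L c T sI SG"
    and "solvable T sI SG"
    and "dyn_admissible \<sigma>h T c sI SG h"
    and "loop_head T c sI SG \<sigma>h h reeval cfg"
  shows "\<exists>e \<in># cfg_Open cfg. entry_val e \<le> hstar T c SG sI"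
proof -
  interpret actx S L c T sI SG \<sigma>h h using assms(1,3) by unfold_locales
  have I: "ainv {} cfg" using assms(4) by (rule lh_inv)
  have key: "\<And>p sg. is_path T sI p sg \<Longrightarrow> sg \<in> SG \<Longrightarrow>
      \<exists>e\<in>#cfg_Open cfg. entry_val e \<le> ennreal (path_cost c p)"
  proof -
    fix p sg assume pa: "is_path T sI p sg" "sg \<in> SG"
    obtain e where "e \<in># cfg_Open cfg"
      "entry_val e \<le> ennreal (gval (cfg_Ip cfg) sI) + ennreal (path_cost c p)"
      using path_extract[OF I pa ainvD(4)[OF I]] by blast
    moreover have "ennreal (gval (cfg_Ip cfg) sI) = 0" using ainvD(5)[OF I] by (simp add: ennreal_eq_0_iff)
    ultimately show "\<exists>e\<in>#cfg_Open cfg. entry_val e \<le> ennreal (path_cost c p)" by auto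
  qed
  obtain p0 sg0 where ps: "is_path T sI p0 sg0" "sg0 \<in> SG" using assms(2) unfolding solvable_def by blast
  define V where "V = entry_val ` set_mset (cfg_Open cfg)"
  have fin: "finite V" unfolding V_def by simp
  have ne: "V \<noteq> {}" using key[OF ps] unfolding V_def by auto
  obtain e0 where e0: "e0 \<in># cfg_Open cfg" "entry_val e0 = Min V"
    using Min_in[OF fin ne] unfolding V_def by auto
  have "entry_val e0 \<le> hstar T c SG sI"
    unfolding hstar_def
  proof (rule INF_greatest)
    fix p assume "p \<in> {p. \<exists>sg\<in>SG. is_path T sI p sg}"
    then obtain sg where "sg \<in> SG" "is_path T sI p sg" by auto
    then obtain e where m: "e \<in># cfg_Open cfg" "entry_val e \<le> ennreal (path_cost c p)" using key by blast
    have "Min V \<le> entry_val e" using Min_le[OF fin] m(1) unfolding V_def by auto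
    then show "entry_val e0 \<le> ennreal (path_cost c p)" using e0(2) m(2) by simp
  qed
  then show ?thesis using e0 by blast
qed

end
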